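(* Let $n\ge2$ and $\mu\in[0,1-\frac1n]$. Then problems (P) and (RP) have the same optimal solutions: an $n\times n$ matrix is an optimal solution of (P) if and only if it is an optimal solution of (RP).
   Context: An $n\times n$ checkerboard copula is a real $n\times n$ matrix $P=(p_{ij})$ with nonnegative entries whose row and column sums all equal $\frac1n$. $\Xi=(\xi_{ij})$ with $\xi_{ij}=1$ if $i=j$, $2$ if $i>j$, $0$ if $i<j$. Let $I(P)=\sum_{i,j}p_{ij}\log p_{ij}$ with $0\log0=0$. Problem (P): minimize $I(P)$ over $n\times n$ checkerboard copulas $P$ with $1-\mathrm{tr}(\Xi P\Xi P^\top)=\mu$. Problem (RP): minimize $I(P)$ over $n\times n$ checkerboard copulas $P$ with $1-\mathrm{tr}(\Xi P\Xi P^\top)\ge\mu$. *)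

theory Defs
  imports Complex_Main
begin

text \<open>n x n matrices are represented as functions nat => nat => real; only the
entries with indices in {..<n} matter (indices 0..n-1 stand for 1..n).\<close>

definition checkerboard :: "nat \<Rightarrow> (nat \<Rightarrow> nat \<Rightarrow> real) \<Rightarrow> bool" where
  "checkerboard n P \<longleftrightarrow>
     (\<forall>i<n. \<forall>j<n. P i j \<ge> 0) \<and>
     (\<forall>i<n. (\<Sum>j<n. P i j) = 1 / real n) \<and>
     (\<forall>j<n. (\<Sum>i<n. P i j) = 1 / real n)"

definition Xi :: "nat \<Rightarrow> nat \<Rightarrow> real" where
  "Xi i j = (if i = j then 1 else if i > j then 2 else 0)"

definition trXPXPt :: "nat \<Rightarrow> (nat \<Rightarrow> nat \<Rightarrow> real) \<Rightarrow> real" where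
  "trXPXPt n P = (\<Sum>i<n. \<Sum>j<n. \<Sum>k<n. \<Sum>l<n. Xi i j * P j k * Xi k l * P i l)"

definition constr :: "nat \<Rightarrow> (nat \<Rightarrow> nat \<Rightarrow> real) \<Rightarrow> real" where
  "constr n P = 1 - trXPXPt n P"

text \<open>I(P) = sum p log p with 0 log 0 = 0 (note ln 0 = 0 in Isabelle, made explicit)\<close>
definition Ient :: "nat \<Rightarrow> (nat \<Rightarrow> nat \<Rightarrow> real) \<Rightarrow> real" where
  "Ient n P = (\<Sum>i<n. \<Sum>j<n. if P i j = 0 then 0 else P i j * ln (P i j))"

definition feasible_P :: "nat \<Rightarrow> real \<Rightarrow> (nat \<Rightarrow> nat \<Rightarrow> real) \<Rightarrow> bool" where
  "feasible_P n \<mu> P \<longleftrightarrow> checkerboard n P \<and> constr n P = \<mu>"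

definition feasible_RP :: "nat \<Rightarrow> real \<Rightarrow> (nat \<Rightarrow> nat \<Rightarrow> real) \<Rightarrow> bool" where
  "feasible_RP n \<mu> P \<longleftrightarrow> checkerboard n P \<and> constr n P \<ge> \<mu>"

definition optimal_P :: "nat \<Rightarrow> real \<Rightarrow> (nat \<Rightarrow> nat \<Rightarrow> real) \<Rightarrow> bool" where
  "optimal_P n \<mu> P \<longleftrightarrow> feasible_P n \<mu> P \<and> (\<forall>Q. feasible_P n \<mu> Q \<longrightarrow> Ient n P \<le> Ient n Q)"

definition optimal_RP :: "nat \<Rightarrow> real \<Rightarrow> (nat \<Rightarrow> nat \<Rightarrow> real) \<Rightarrow> bool" where
  "optimal_RP n \<mu> P \<longleftrightarrow> feasible_RP n \<mu> P \<and> (\<forall>Q. feasible_RP n \<mu> Q \<longrightarrow> Ient n P \<le> Ient n Q)"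

end

theory Submission
  imports Defs
begin

definition fe :: "real \<Rightarrow> real" where
  "fe x = (if x = 0 then 0 else x * ln x)"

lemma Ient_fe: "Ient n P = (\<Sum>i<n. \<Sum>j<n. fe (P i j))"
  unfolding Ient_def fe_def by simp

lemma tangent:
  assumes c: "c > 0" and p: "p \<ge> 0"
  shows "fe p \<ge> fe c + (ln c + 1) * (p - c)"
    and "fe p = fe c + (ln c + 1) * (p - c) \<Longrightarrow> p = c"
proof -
  have "fe p \<ge> fe c + (ln c + 1) * (p - c) \<and> (fe p = fe c + (ln c + 1) * (p - c) \<longrightarrow> p = c)"
  proof (cases "p = 0")
    case True
    then show ?thesis using c by (simp add: fe_def algebra_simps)
  next
    case False
    then have pp: "p > 0" using p by simp
    have e: "fe p - (fe c + (ln c + 1) * (p - c)) = c - p - p * (ln c - ln p)"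
      using pp c by (simp add: fe_def algebra_simps)
    have l: "ln (c/p) \<le> c/p - 1" using ln_le_minus_one[of "c/p"] pp c by simp
    have lq: "ln (c/p) = ln c - ln p" using pp c by (simp add: ln_div)
    have "p * (ln c - ln p) \<le> p * (c/p - 1)" using l lq pp by (simp add: mult_left_mono)
    also have "\<dots> = c - p" using pp by (simp add: field_simps)
    finally have A: "p * (ln c - ln p) \<le> c - p" .
    have B: "fe p = fe c + (ln c + 1) * (p - c) \<longrightarrow> p = c"
    proof
      assume "fe p = fe c + (ln c + 1) * (p - c)"
      then have "p * (ln c - ln p) = c - p" using e by linarith
      also have "c - p = p * (c/p - 1)" using pp by (simp add: field_simps)
      finally have "p * (ln c - ln p) = p * (c/p - 1)" .
      then have "ln (c/p) = c/p - 1" using pp lq by simp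
      then have "c/p = 1" using ln_eq_minus_one[of "c/p"] pp c by simp
      then show "p = c" using pp by (simp add: field_simps)
    qed
    show ?thesis using A B e by linarith
  qed
  then show "fe p \<ge> fe c + (ln c + 1) * (p - c)"
    and "fe p = fe c + (ln c + 1) * (p - c) \<Longrightarrow> p = c" by auto
qed

lemma fe_convex:
  assumes a: "a \<ge> 0" and c: "c > 0" and t: "0 \<le> t" "t \<le> 1"
  shows "fe ((1-t)*a + t*c) \<le> (1-t) * fe a + t * fe c"
proof (cases "t = 0")
  case True then show ?thesis by simp
next
  case False
  then have tp: "t > 0" using t by simp
  define x where "x = (1-t)*a + t*c"
  have xp: "x > 0" unfolding x_def using a c t tp
    by (smt (verit) mult_nonneg_nonneg mult_pos_pos)
  have 1: "fe a \<ge> fe x + (ln x + 1) * (a - x)" using tangent(1)[OF xp a] .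
  have 2: "fe c \<ge> fe x + (ln x + 1) * (c - x)" using tangent(1)[OF xp] c by simp
  have "(1-t) * fe a + t * fe c \<ge> (1-t) * (fe x + (ln x + 1) * (a - x)) + t * (fe x + (ln x + 1) * (c - x))"
    using 1 2 t by (smt (verit) mult_left_mono)
  also have "(1-t) * (fe x + (ln x + 1) * (a - x)) + t * (fe x + (ln x + 1) * (c - x)) = fe x"
    unfolding x_def by (simp add: algebra_simps)
  finally show ?thesis unfolding x_def .
qed

definition mixc :: "nat \<Rightarrow> real \<Rightarrow> (nat \<Rightarrow> nat \<Rightarrow> real) \<Rightarrow> nat \<Rightarrow> nat \<Rightarrow> real" where
  "mixc n t P = (\<lambda>i j. (1-t) * P i j + t * (1 / (real n)^2))"

lemma sum_total:
  assumes "checkerboard n P"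
  shows "(\<Sum>i<n. \<Sum>j<n. P i j) = (if n = 0 then 0 else 1)"
  using assms unfolding checkerboard_def by simp

lemma mixc_cb:
  assumes "checkerboard n P" "0 \<le> t" "t \<le> 1" "n > 0"
  shows "checkerboard n (mixc n t P)"
proof -
  have r: "(\<Sum>j<n. mixc n t P i j) = 1 / real n" if "i < n" for i
  proof -
    have "(\<Sum>j<n. mixc n t P i j) = (1-t) * (\<Sum>j<n. P i j) + real n * (t / (real n)^2)"
      unfolding mixc_def by (simp add: sum.distrib sum_distrib_left)
    also have "\<dots> = 1 / real n" using assms that unfolding checkerboard_def
      by (simp add: power2_eq_square field_simps)
    finally show ?thesis .
  qed
  have c: "(\<Sum>i<n. mixc n t P i j) = 1 / real n" if "j < n" for j
  proof -
    have "(\<Sum>i<n. mixc n t P i j) = (1-t) * (\<Sum>i<n. P i j) + real n * (t / (real n)^2)"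
      unfolding mixc_def by (simp add: sum.distrib sum_distrib_left)
    also have "\<dots> = 1 / real n" using assms that unfolding checkerboard_def
      by (simp add: power2_eq_square field_simps)
    finally show ?thesis .
  qed
  have "mixc n t P i j \<ge> 0" if "i < n" "j < n" for i j
    using assms that unfolding checkerboard_def mixc_def by simp
  then show ?thesis using r c unfolding checkerboard_def by blast
qed

lemma Ient_convex:
  assumes "checkerboard n P" "0 \<le> t" "t \<le> 1" "n > 0"
  shows "Ient n (mixc n t P) \<le> (1-t) * Ient n P + t * Ient n (mixc n 1 P)"
proof -
  have cp: "(1 / (real n)^2) > 0" using assms by simp
  have "Ient n (mixc n t P) \<le> (\<Sum>i<n. \<Sum>j<n. (1-t) * fe (P i j) + t * fe (1 / (real n)^2))"
    unfolding Ient_fe mixc_def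
    apply (intro sum_mono)
    using fe_convex[OF _ cp assms(2,3)] assms(1) unfolding checkerboard_def by auto
  also have "\<dots> = (1-t) * Ient n P + t * Ient n (mixc n 1 P)"
    unfolding Ient_fe mixc_def by (simp add: sum.distrib sum_distrib_left)
  finally show ?thesis .
qed

lemma Xi_sum: "(\<Sum>i<n. \<Sum>j<n. Xi i j) = (real n)^2"
proof (induction n)
  case 0 then show ?case by simp
next
  case (Suc n)
  have a: "(\<Sum>i<n. Xi i n) = 0" by (simp add: Xi_def)
  have b: "(\<Sum>j<n. Xi n j) = 2 * real n" by (simp add: Xi_def)
  have "(\<Sum>i<Suc n. \<Sum>j<Suc n. Xi i j) = (\<Sum>i<n. \<Sum>j<n. Xi i j) + (\<Sum>i<n. Xi i n) + (\<Sum>j<n. Xi n j) + Xi n n"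
    by (simp add: sum.distrib)
  also have "\<dots> = (real (Suc n))^2" using Suc a b by (simp add: Xi_def power2_eq_square algebra_simps)
  finally show ?case .
qed

lemma constr_Pi:
  assumes "n > 0"
  shows "constr n (mixc n 1 P) = 0"
proof -
  have "trXPXPt n (mixc n 1 P) = (\<Sum>i<n. \<Sum>j<n. \<Sum>k<n. \<Sum>l<n. (Xi i j * Xi k l) * (1 / (real n)^2)^2)"
    unfolding trXPXPt_def mixc_def by (simp add: power2_eq_square algebra_simps)
  also have "\<dots> = (\<Sum>i<n. \<Sum>j<n. Xi i j * (\<Sum>k<n. \<Sum>l<n. Xi k l)) * (1 / (real n)^2)^2"
    by (simp add: sum_distrib_left sum_distrib_right mult.assoc)
  also have "\<dots> = (\<Sum>i<n. \<Sum>j<n. Xi i j) * (\<Sum>k<n. \<Sum>l<n. Xi k l) * (1 / (real n)^2)^2"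
    by (simp add: sum_distrib_right)
  also have "\<dots> = 1" using assms by (simp add: Xi_sum field_simps power2_eq_square)
  finally show ?thesis unfolding constr_def by simp
qed

lemma gibbs:
  assumes "checkerboard n Q" "n > 0"
  shows "Ient n (mixc n 1 Q) \<le> Ient n Q"
    and "Ient n Q = Ient n (mixc n 1 Q) \<Longrightarrow> (\<forall>i<n. \<forall>j<n. Q i j = 1 / (real n)^2)"
proof -
  define c where "c = 1 / (real n)^2"
  have cp: "c > 0" unfolding c_def using assms by simp
  define g where "g i j = fe (Q i j) - (fe c + (ln c + 1) * (Q i j - c))" for i j
  have gn: "g i j \<ge> 0" if "i \<in> {..<n}" "j \<in> {..<n}" for i j
    using tangent(1)[OF cp, of "Q i j"] assms that unfolding g_def checkerboard_def by auto
  have sQ: "(\<Sum>i<n. \<Sum>j<n. Q i j) = 1" using sum_total[OF assms(1)] assms by simp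
  have "(\<Sum>i<n. \<Sum>j<n. g i j) = Ient n Q - (real n * real n * fe c + (ln c + 1) * ((\<Sum>i<n. \<Sum>j<n. Q i j) - real n * real n * c))"
    unfolding g_def Ient_fe by (simp add: sum_subtractf sum.distrib sum_distrib_left algebra_simps)
  also have "\<dots> = Ient n Q - Ient n (mixc n 1 Q)"
    unfolding Ient_fe mixc_def c_def using sQ assms by (simp add: power2_eq_square)
  finally have eq: "(\<Sum>i<n. \<Sum>j<n. g i j) = Ient n Q - Ient n (mixc n 1 Q)" .
  have "(\<Sum>i<n. \<Sum>j<n. g i j) \<ge> 0" using gn by (intro sum_nonneg) auto
  then show "Ient n (mixc n 1 Q) \<le> Ient n Q" using eq by simp
  assume h: "Ient n Q = Ient n (mixc n 1 Q)"
  then have z: "(\<Sum>i<n. \<Sum>j<n. g i j) = 0" using eq by simp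
  show "\<forall>i<n. \<forall>j<n. Q i j = 1 / (real n)^2"
  proof (intro allI impI)
    fix i j assume ij: "i < n" "j < n"
    have "\<forall>i\<in>{..<n}. (\<Sum>j<n. g i j) = 0"
      using z gn by (subst sum_nonneg_eq_0_iff[symmetric]) (auto intro: sum_nonneg)
    then have "(\<Sum>j<n. g i j) = 0" using ij by simp
    then have "g i j = 0" using gn ij sum_nonneg_eq_0_iff[of "{..<n}" "g i"] by auto
    then have "Q i j = c" using tangent(2)[OF cp, of "Q i j"] assms ij
      unfolding g_def checkerboard_def by auto
    then show "Q i j = 1 / (real n)^2" unfolding c_def .
  qed
qed

lemma constr_cong:
  assumes "\<forall>i<n. \<forall>j<n. P i j = Q i j"
  shows "constr n P = constr n Q"
  unfolding constr_def trXPXPt_def using assms by (intro arg_cong[where f="\<lambda>x. 1 - x"] sum.cong) auto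

lemma cont_constr: "continuous_on {0..1} (\<lambda>t. constr n (mixc n t P))"
  unfolding constr_def trXPXPt_def mixc_def by (intro continuous_intros)

lemma mixc0: "mixc n 0 P = P" unfolding mixc_def by simp

theorem lemma8:
  fixes n :: nat and \<mu> :: real and P :: "nat \<Rightarrow> nat \<Rightarrow> real"
  assumes "n \<ge> 2" and "0 \<le> \<mu>" and "\<mu> \<le> 1 - 1 / real n"
  shows "optimal_P n \<mu> P \<longleftrightarrow> optimal_RP n \<mu> P"
proof
  have n0: "n > 0" using assms by simp
  assume opt: "optimal_P n \<mu> P"
  show "optimal_RP n \<mu> P"
    unfolding optimal_RP_def feasible_RP_def
  proof (intro conjI allI impI)
    show "checkerboard n P" "\<mu> \<le> constr n P" using opt unfolding optimal_P_def feasible_P_def by auto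
    fix Q assume Q: "checkerboard n Q \<and> \<mu> \<le> constr n Q"
    obtain t where t: "0 \<le> t" "t \<le> 1" "constr n (mixc n t Q) = \<mu>"
      using IVT2'[of "\<lambda>t. constr n (mixc n t Q)" 1 \<mu> 0] cont_constr[of n Q]
        constr_Pi[OF n0, of Q] Q assms(2) by (auto simp: mixc0)
    have "feasible_P n \<mu> (mixc n t Q)" unfolding feasible_P_def
      using mixc_cb[OF _ t(1,2) n0] Q t(3) by auto
    then have "Ient n P \<le> Ient n (mixc n t Q)" using opt unfolding optimal_P_def by auto
    also have "\<dots> \<le> (1-t) * Ient n Q + t * Ient n (mixc n 1 Q)"
      using Ient_convex[OF _ t(1,2) n0] Q by auto
    also have "\<dots> \<le> (1-t) * Ient n Q + t * Ient n Q"
      using gibbs(1)[OF _ n0, of Q] Q t by (simp add: mult_left_mono)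
    finally show "Ient n P \<le> Ient n Q" by (simp add: algebra_simps)
  qed
next
  have n0: "n > 0" using assms by simp
  assume opt: "optimal_RP n \<mu> P"
  have cb: "checkerboard n P" and ge: "\<mu> \<le> constr n P"
    using opt unfolding optimal_RP_def feasible_RP_def by auto
  have eqc: "constr n P = \<mu>"
  proof (rule ccontr)
    assume "constr n P \<noteq> \<mu>"
    then have gt: "constr n P > \<mu>" using ge by simp
    obtain t where t: "0 \<le> t" "t \<le> 1" "constr n (mixc n t P) = \<mu>"
      using IVT2'[of "\<lambda>t. constr n (mixc n t P)" 1 \<mu> 0] cont_constr[of n P]
        constr_Pi[OF n0, of P] gt assms(2) by (auto simp: mixc0)
    have tp: "t > 0" using t gt by (cases "t = 0") (auto simp: mixc0)
    have "feasible_RP n \<mu> (mixc n t P)" unfolding feasible_RP_def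
      using mixc_cb[OF cb t(1,2) n0] t(3) by auto
    then have "Ient n P \<le> Ient n (mixc n t P)" using opt unfolding optimal_RP_def by auto
    also have "\<dots> \<le> (1-t) * Ient n P + t * Ient n (mixc n 1 P)"
      using Ient_convex[OF cb t(1,2) n0] by auto
    finally have "t * Ient n P \<le> t * Ient n (mixc n 1 P)" by (simp add: algebra_simps)
    then have "Ient n P \<le> Ient n (mixc n 1 P)" using tp by simp
    then have "Ient n P = Ient n (mixc n 1 P)" using gibbs(1)[OF cb n0] by simp
    then have "\<forall>i<n. \<forall>j<n. P i j = mixc n 1 P i j" using gibbs(2)[OF cb n0] unfolding mixc_def by simp
    then have "constr n P = 0" using constr_cong constr_Pi[OF n0] by metis
    then show False using gt assms(2) by simp
  qed
  show "optimal_P n \<mu> P" unfolding optimal_P_def feasible_P_def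
  proof (intro conjI allI impI)
    show "checkerboard n P" "constr n P = \<mu>" using cb eqc by auto
    fix Q assume "checkerboard n Q \<and> constr n Q = \<mu>"
    then have "feasible_RP n \<mu> Q" unfolding feasible_RP_def by simp
    then show "Ient n P \<le> Ient n Q" using opt unfolding optimal_RP_def by auto
  qed
qed

end
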